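(* For integers $n\ge1$, $t\ge0$ and $\bm{N}=(t,t,\ldots,t,-nt)\in\mathbb{Z}^{n+1}$, \[ (t+1)^{\binom n2}\;\ge\;K_n(\bm{N})\;\ge\;\prod_{i=1}^{n-1}(it+1). \]
   Context: $K_n(\bm{N})$ is the number of integer vectors $(f_{ij})_{0\le i<j\le n}\in\mathbb{Z}_{\ge0}^{\binom{n+1}{2}}$ with $\sum_{j>i} f_{ij}-\sum_{k<i} f_{ki}=N_i$ for every $i\in\{0,\ldots,n\}$. *)

theory Defs
  imports Main
begin

definition pairs :: "nat \<Rightarrow> (nat \<times> nat) set" where
  "pairs n = {(i, j). i < j \<and> j \<le> n}"

definition flows :: "nat \<Rightarrow> (nat \<Rightarrow> int) \<Rightarrow> (nat \<times> nat \<Rightarrow> nat) set" where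
  "flows n N = {f. (\<forall>p. p \<notin> pairs n \<longrightarrow> f p = 0) \<and>
     (\<forall>i\<le>n. (\<Sum>j\<in>{i<..n}. int (f (i, j))) - (\<Sum>k<i. int (f (k, i))) = N i)}"

definition K :: "nat \<Rightarrow> (nat \<Rightarrow> int) \<Rightarrow> nat" where
  "K n N = card (flows n N)"

end

theory Submission imports Defs "HOL-Library.FuncSet" Complex_Main begin

definition Nr :: "nat \<Rightarrow> (nat \<Rightarrow> int) \<Rightarrow> nat \<Rightarrow> int" where
  "Nr m N = (\<lambda>i. if i < m then N i else N m + N (Suc m))"

definition psi :: "nat \<Rightarrow> (nat \<Rightarrow> int) \<Rightarrow> (nat \<times> nat \<Rightarrow> nat) \<Rightarrow> (nat \<Rightarrow> nat) \<Rightarrow> nat \<times> nat \<Rightarrow> nat" where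
  "psi m N g s = (\<lambda>(i,j). if j < m then g (i,j) else if j = m then (if i < m then s i else 0)
     else if j = Suc m then (if i < m then g (i,m) - s i else if i = m then nat (N m + (\<Sum>k<m. int (s k))) else 0)
     else 0)"

definition phi :: "nat \<Rightarrow> (nat \<times> nat \<Rightarrow> nat) \<Rightarrow> (nat \<times> nat \<Rightarrow> nat) \<times> (nat \<Rightarrow> nat)" where
  "phi m f = ((\<lambda>(i,j). if j < m then f (i,j) else if j = m \<and> i < m then f (i,m) + f (i,Suc m) else 0),
              restrict (\<lambda>i. f (i,m)) {..<m})"

lemma set1: "i < (m::nat) \<Longrightarrow> {i<..Suc m} = insert (Suc m) (insert m {i<..<m})" by auto
lemma set2: "i < (m::nat) \<Longrightarrow> {i<..m} = insert m {i<..<m}" by auto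
lemma set3: "{(m::nat)<..Suc m} = {Suc m}" by auto

lemma flowsD1: "f \<in> flows n N \<Longrightarrow> \<not> (i < j \<and> j \<le> n) \<Longrightarrow> f (i,j) = 0"
  by (auto simp: flows_def pairs_def)
lemma flowsD2: "f \<in> flows n N \<Longrightarrow> i \<le> n \<Longrightarrow> (\<Sum>j\<in>{i<..n}. int (f (i, j))) - (\<Sum>k<i. int (f (k, i))) = N i"
  by (auto simp: flows_def)
lemma flowsI: "(\<And>i j. \<not> (i < j \<and> j \<le> n) \<Longrightarrow> f (i,j) = 0) \<Longrightarrow>
   (\<And>i. i \<le> n \<Longrightarrow> (\<Sum>j\<in>{i<..n}. int (f (i, j))) - (\<Sum>k<i. int (f (k, i))) = N i) \<Longrightarrow> f \<in> flows n N"
  by (auto simp: flows_def pairs_def)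

lemma phi_in:
  assumes f: "f \<in> flows (Suc m) N"
  shows "phi m f \<in> (SIGMA g:flows m (Nr m N). PiE {..<m} (\<lambda>i. {0..g(i,m)}))"
proof -
  define g where "g = fst (phi m f)"
  have gv: "g (i,j) = (if j < m then f (i,j) else if j = m \<and> i < m then f (i,m) + f (i,Suc m) else 0)" for i j
    by (simp add: g_def phi_def)
  have "g \<in> flows m (Nr m N)"
  proof (rule flowsI)
    fix i j assume "\<not> (i < j \<and> j \<le> m)" thus "g (i,j) = 0" using flowsD1[OF f, of i j] by (auto simp: gv)
  next
    fix i assume i: "i \<le> m"
    show "(\<Sum>j\<in>{i<..m}. int (g (i, j))) - (\<Sum>k<i. int (g (k, i))) = Nr m N i"
    proof (cases "i < m")
      case True
      have "(\<Sum>j\<in>{i<..m}. int (g (i, j))) = (\<Sum>j\<in>{i<..<m}. int (f (i, j))) + int (f (i,m)) + int (f (i, Suc m))"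
        using True by (simp add: set2 gv)
      moreover have "(\<Sum>j\<in>{i<..Suc m}. int (f (i, j))) = (\<Sum>j\<in>{i<..<m}. int (f (i, j))) + int (f (i,m)) + int (f (i, Suc m))"
        using True by (simp add: set1)
      moreover have "(\<Sum>k<i. int (g (k, i))) = (\<Sum>k<i. int (f (k, i)))"
        using True by (intro sum.cong) (auto simp: gv)
      ultimately show ?thesis using flowsD2[OF f, of i] True by (simp add: Nr_def)
    next
      case False
      hence im: "i = m" using i by simp
      have e1: "int (f (m, Suc m)) - (\<Sum>k<m. int (f (k, m))) = N m"
        using flowsD2[OF f, of m] by (simp add: set3)
      have e2: "- (\<Sum>k<m. int (f (k, Suc m))) - int (f (m, Suc m)) = N (Suc m)"
        using flowsD2[OF f, of "Suc m"] by simp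
      have "(\<Sum>k<m. int (g (k, m))) = (\<Sum>k<m. int (f (k, m))) + (\<Sum>k<m. int (f (k, Suc m)))"
        by (simp add: gv sum.distrib)
      thus ?thesis using e1 e2 im by (simp add: Nr_def)
    qed
  qed
  moreover have "snd (phi m f) \<in> PiE {..<m} (\<lambda>i. {0..g(i,m)})"
    by (auto simp: phi_def gv)
  ultimately show ?thesis by (cases "phi m f") (simp add: g_def)
qed

lemma psi_in:
  assumes Nm: "N m \<ge> 0" and g: "g \<in> flows m (Nr m N)" and s: "s \<in> PiE {..<m} (\<lambda>i. {0..g(i,m)})"
  shows "psi m N g s \<in> flows (Suc m) N"
proof -
  define f where "f = psi m N g s"
  have sle: "i < m \<Longrightarrow> s i \<le> g (i,m)" for i using s by (simp add: PiE_iff)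
  have fv: "f (i,j) = (if j < m then g (i,j) else if j = m then (if i < m then s i else 0)
     else if j = Suc m then (if i < m then g (i,m) - s i else if i = m then nat (N m + (\<Sum>k<m. int (s k))) else 0)
     else 0)" for i j by (simp add: f_def psi_def)
  have sge: "(\<Sum>k<m. int (s k)) \<ge> 0" by (simp add: sum_nonneg)
  show ?thesis unfolding f_def[symmetric]
  proof (rule flowsI)
    fix i j assume "\<not> (i < j \<and> j \<le> Suc m)" thus "f (i,j) = 0" using flowsD1[OF g, of i j] by (auto simp: fv)
  next
    fix i assume i: "i \<le> Suc m"
    consider "i < m" | "i = m" | "i = Suc m" using i by linarith
    thus "(\<Sum>j\<in>{i<..Suc m}. int (f (i, j))) - (\<Sum>k<i. int (f (k, i))) = N i"
    proof cases
      case 1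
      have "(\<Sum>j\<in>{i<..Suc m}. int (f (i, j))) = (\<Sum>j\<in>{i<..<m}. int (g (i, j))) + int (s i) + int (g (i,m) - s i)"
        using 1 by (simp add: set1 fv)
      also have "\<dots> = (\<Sum>j\<in>{i<..m}. int (g (i, j)))" using 1 sle[OF 1] by (simp add: set2 of_nat_diff)
      finally have a: "(\<Sum>j\<in>{i<..Suc m}. int (f (i, j))) = (\<Sum>j\<in>{i<..m}. int (g (i, j)))" .
      have b: "(\<Sum>k<i. int (f (k, i))) = (\<Sum>k<i. int (g (k, i)))"
        using 1 by (intro sum.cong) (auto simp: fv)
      show ?thesis using a b flowsD2[OF g, of i] 1 by (simp add: Nr_def)
    next
      case 2
      have "(\<Sum>k<m. int (f (k, m))) = (\<Sum>k<m. int (s k))" by (intro sum.cong) (auto simp: fv)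
      thus ?thesis using 2 Nm sge by (simp add: set3 fv)
    next
      case 3
      have gm: "- (\<Sum>k<m. int (g (k, m))) = N m + N (Suc m)"
        using flowsD2[OF g, of m] by (simp add: Nr_def)
      have "(\<Sum>k<m. int (f (k, Suc m))) = (\<Sum>k<m. int (g (k, m)) - int (s k))"
        using sle by (intro sum.cong) (auto simp: fv of_nat_diff)
      also have "\<dots> = (\<Sum>k<m. int (g (k, m))) - (\<Sum>k<m. int (s k))" by (simp add: sum_subtractf)
      finally have c: "(\<Sum>k<m. int (f (k, Suc m))) = (\<Sum>k<m. int (g (k, m))) - (\<Sum>k<m. int (s k))" .
      have d: "int (f (m, Suc m)) = N m + (\<Sum>k<m. int (s k))" using Nm sge by (simp add: fv)
      show ?thesis using 3 c d gm by simp
    qed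
  qed
qed

lemma phi_psi:
  assumes g: "g \<in> flows m (Nr m N)" and s: "s \<in> PiE {..<m} (\<lambda>i. {0..g(i,m)})"
  shows "phi m (psi m N g s) = (g, s)"
proof -
  have sle: "i < m \<Longrightarrow> s i \<le> g (i,m)" for i using s by (simp add: PiE_iff)
  have 1: "fst (phi m (psi m N g s)) = g"
  proof (rule ext, clarify)
    fix i j show "fst (phi m (psi m N g s)) (i,j) = g (i,j)"
      using sle[of i] flowsD1[OF g, of i j] by (auto simp: phi_def psi_def)
  qed
  have 2: "snd (phi m (psi m N g s)) = s"
  proof (rule ext)
    fix i show "snd (phi m (psi m N g s)) i = s i"
      using s by (auto simp: phi_def psi_def PiE_def extensional_def)
  qed
  show ?thesis using 1 2 by (metis prod.collapse)
qed

lemma psi_phi: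
  assumes f: "f \<in> flows (Suc m) N"
  shows "psi m N (fst (phi m f)) (snd (phi m f)) = f"
proof (rule ext, clarify)
  fix i j
  have e1: "int (f (m, Suc m)) - (\<Sum>k<m. int (f (k, m))) = N m"
    using flowsD2[OF f, of m] by (simp add: set3)
  hence e: "f (m, Suc m) = nat (N m + (\<Sum>k<m. int (f (k, m))))" by linarith
  show "psi m N (fst (phi m f)) (snd (phi m f)) (i,j) = f (i,j)"
    using flowsD1[OF f, of i j] e by (auto simp: phi_def psi_def)
qed


lemma rec_card:
  assumes Nm: "N m \<ge> 0" and fin: "finite (flows m (Nr m N))"
  shows "finite (flows (Suc m) N) \<and> K (Suc m) N = (\<Sum>g\<in>flows m (Nr m N). \<Prod>i<m. (g(i,m)+1))"
proof -
  let ?A = "SIGMA g:flows m (Nr m N). PiE {..<m} (\<lambda>i. {0..g(i,m)})"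
  have bij: "bij_betw (\<lambda>(g,s). psi m N g s) ?A (flows (Suc m) N)"
  proof (rule bij_betw_byWitness[where f'="phi m"])
    show "\<forall>a\<in>?A. phi m (case a of (g, s) \<Rightarrow> psi m N g s) = a"
    proof
      fix a assume a: "a \<in> ?A"
      obtain g s where as: "a = (g,s)" by (cases a)
      from a have "g \<in> flows m (Nr m N)" "s \<in> PiE {..<m} (\<lambda>i. {0..g(i,m)})" by (simp_all add: as)
      thus "phi m (case a of (g, s) \<Rightarrow> psi m N g s) = a" by (simp add: as phi_psi)
    qed
    show "\<forall>a'\<in>flows (Suc m) N. (case phi m a' of (g, s) \<Rightarrow> psi m N g s) = a'"
    proof
      fix f assume "f \<in> flows (Suc m) N"
      from psi_phi[OF this] show "(case phi m f of (g, s) \<Rightarrow> psi m N g s) = f"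
        by (simp add: case_prod_beta)
    qed
    show "(\<lambda>(g, s). psi m N g s) ` ?A \<subseteq> flows (Suc m) N"
    proof
      fix f assume "f \<in> (\<lambda>(g, s). psi m N g s) ` ?A"
      then obtain a where a: "a \<in> ?A" and fa: "f = (case a of (g, s) \<Rightarrow> psi m N g s)" by (rule imageE)
      obtain g s where as: "a = (g,s)" by (cases a)
      from a have "g \<in> flows m (Nr m N)" "s \<in> PiE {..<m} (\<lambda>i. {0..g(i,m)})" by (simp_all add: as)
      from psi_in[OF Nm this] show "f \<in> flows (Suc m) N" by (simp add: fa as)
    qed
    show "phi m ` flows (Suc m) N \<subseteq> ?A"
      using phi_in by (simp add: image_subset_iff)
  qed
  have finA: "finite ?A"
    by (rule finite_SigmaI[OF fin]) (simp add: finite_PiE)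
  have "card ?A = (\<Sum>g\<in>flows m (Nr m N). card (PiE {..<m} (\<lambda>i. {0..g(i,m)})))"
    by (rule card_SigmaI[OF fin]) (simp add: finite_PiE)
  also have "\<dots> = (\<Sum>g\<in>flows m (Nr m N). \<Prod>i<m. (g(i,m)+1))"
    by (simp add: card_PiE)
  finally have cA: "card ?A = (\<Sum>g\<in>flows m (Nr m N). \<Prod>i<m. (g(i,m)+1))" .
  show ?thesis using bij finA cA bij_betw_same_card bij_betw_finite unfolding K_def by metis
qed

lemma prod_lower:
  fixes x :: "nat \<Rightarrow> nat"
  assumes "finite A"
  shows "1 + (\<Sum>k\<in>A. x k) \<le> (\<Prod>k\<in>A. (x k + 1))"
  using assms
proof (induction A rule: finite_induct)
  case empty then show ?case by simp
next
  case (insert a A)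
  have "1 + (\<Sum>k\<in>insert a A. x k) = x a + (1 + (\<Sum>k\<in>A. x k))" using insert by simp
  also have "\<dots> \<le> x a * (\<Prod>k\<in>A. (x k + 1)) + (\<Prod>k\<in>A. (x k + 1))"
  proof -
    have "1 \<le> (\<Prod>k\<in>A. (x k + 1))" by (simp add: Suc_le_eq prod_pos)
    hence "x a \<le> x a * (\<Prod>k\<in>A. (x k + 1))" by simp
    thus ?thesis using insert.IH by linarith
  qed
  also have "\<dots> = (\<Prod>k\<in>insert a A. (x k + 1))" using insert by (simp add: algebra_simps)
  finally show ?case .
qed

lemma prod_upper:
  fixes x :: "nat \<Rightarrow> nat"
  assumes s: "(\<Sum>k<m. x k) = m * t"
  shows "(\<Prod>k<m. (x k + 1)) \<le> (t + 1) ^ m"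
proof -
  define y where "y k = real (x k + 1) / real (t + 1)" for k
  have "(\<Prod>k<m. y k) \<le> (\<Prod>k<m. exp (y k - 1))"
  proof (rule prod_mono)
    fix k show "0 \<le> y k \<and> y k \<le> exp (y k - 1)"
      using exp_ge_add_one_self[of "y k - 1"] by (simp add: y_def)
  qed
  also have "\<dots> = exp (\<Sum>k<m. (y k - 1))" by (simp add: exp_sum)
  also have "(\<Sum>k<m. (y k - 1)) = 0"
  proof -
    have "(\<Sum>k<m. y k) = (\<Sum>k<m. real (x k + 1)) / real (t + 1)"
      by (simp add: y_def sum_divide_distrib)
    also have "(\<Sum>k<m. real (x k + 1)) = real (m * t + m)"
      using s by (simp add: sum.distrib flip: of_nat_sum)
    finally have h: "(\<Sum>k<m. y k) = real (m * t + m) / real (t + 1)" .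
    have "real (m * t + m) = real m * real (t + 1)" by (simp add: algebra_simps)
    hence "(\<Sum>k<m. y k) = real m" using h by simp
    thus ?thesis by (simp add: sum_subtractf)
  qed
  finally have "(\<Prod>k<m. y k) \<le> 1" by simp
  moreover have "(\<Prod>k<m. y k) = real (\<Prod>k<m. (x k + 1)) / real ((t + 1) ^ m)"
    by (simp add: y_def prod_dividef)
  ultimately have "real (\<Prod>k<m. (x k + 1)) \<le> real ((t + 1) ^ m)"
    by (simp add: divide_le_eq_1 split: if_splits)
  thus ?thesis by linarith
qed


definition Nt :: "nat \<Rightarrow> nat \<Rightarrow> nat \<Rightarrow> int" where
  "Nt t n = (\<lambda>i. if i < n then int t else - (int n * int t))"

lemma Nr_Nt: "Nr m (Nt t (Suc m)) = Nt t m"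
  by (auto simp: Nr_def Nt_def fun_eq_iff algebra_simps)

lemma flows0: "flows 0 (Nt t 0) = {\<lambda>_. 0}"
proof
  show "flows 0 (Nt t 0) \<subseteq> {\<lambda>_. 0}"
  proof
    fix f assume f: "f \<in> flows 0 (Nt t 0)"
    have "f p = 0" for p using flowsD1[OF f, of "fst p" "snd p"] by simp
    thus "f \<in> {\<lambda>_. 0}" by auto
  qed
  show "{\<lambda>_. 0} \<subseteq> flows 0 (Nt t 0)"
    by (auto intro!: flowsI simp: Nt_def)
qed

lemma sink:
  assumes g: "g \<in> flows m (Nt t m)"
  shows "(\<Sum>k<m. g (k,m)) = m * t"
proof -
  have "- (\<Sum>k<m. int (g (k, m))) = - (int m * int t)"
    using flowsD2[OF g, of m] by (simp add: Nt_def)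
  hence "int (\<Sum>k<m. g (k, m)) = int (m * t)" by simp
  thus ?thesis by (simp only: of_nat_eq_iff)
qed

lemma main_ind:
  "finite (flows n (Nt t n)) \<and> K n (Nt t n) \<le> (t+1)^(n choose 2) \<and> (\<Prod>i=1..n-1. i*t+1) \<le> K n (Nt t n)"
proof (induction n)
  case 0
  then show ?case by (simp add: K_def flows0)
next
  case (Suc m)
  let ?F = "flows m (Nt t m)"
  have N0: "Nt t (Suc m) m \<ge> 0" by (simp add: Nt_def)
  from rec_card[of "Nt t (Suc m)" m, OF N0] Suc.IH have R: "finite (flows (Suc m) (Nt t (Suc m)))"
     "K (Suc m) (Nt t (Suc m)) = (\<Sum>g\<in>?F. \<Prod>i<m. (g(i,m)+1))"
    by (simp_all add: Nr_Nt)
  have KF: "K m (Nt t m) = card ?F" by (simp add: K_def)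
  have up: "(\<Prod>i<m. (g(i,m)+1)) \<le> (t+1)^m" if "g \<in> ?F" for g
    using prod_upper[OF sink[OF that]] .
  have lo: "m*t+1 \<le> (\<Prod>i<m. (g(i,m)+1))" if "g \<in> ?F" for g
    using prod_lower[of "{..<m}" "\<lambda>k. g (k,m)"] sink[OF that] by simp
  have "K (Suc m) (Nt t (Suc m)) \<le> (\<Sum>g\<in>?F. (t+1)^m)" unfolding R(2) by (rule sum_mono) (rule up)
  also have "\<dots> = K m (Nt t m) * (t+1)^m" by (simp add: KF)
  also have "\<dots> \<le> (t+1)^(m choose 2) * (t+1)^m" using Suc.IH by simp
  also have "\<dots> = (t+1)^(Suc m choose 2)"
    by (simp add: numeral_2_eq_2 power_add)
  finally have A: "K (Suc m) (Nt t (Suc m)) \<le> (t+1)^(Suc m choose 2)" .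
  have "(\<Prod>i=1..Suc m-1. i*t+1) = (\<Prod>i=1..m-1. i*t+1) * (m*t+1)"
  proof (cases m)
    case 0 then show ?thesis by simp
  next
    case (Suc k) then show ?thesis by (simp add: prod.cl_ivl_Suc)
  qed
  also have "\<dots> \<le> K m (Nt t m) * (m*t+1)" using Suc.IH mult_le_mono1 by blast
  also have "\<dots> = (\<Sum>g\<in>?F. m*t+1)" by (simp add: KF)
  also have "\<dots> \<le> K (Suc m) (Nt t (Suc m))" unfolding R(2) by (rule sum_mono) (rule lo)
  finally show ?case using A R(1) by simp
qed

theorem proposition2p17:
  fixes n t :: nat
  assumes "n \<ge> 1"
  defines "N \<equiv> (\<lambda>i. if i < n then int t else - (int n * int t))"
  shows "(t + 1) ^ (n choose 2) \<ge> K n N \<and> K n N \<ge> (\<Prod>i=1..n-1. i * t + 1)"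
  using main_ind[of n t] unfolding N_def Nt_def by simp

end
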